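(* Let $(X,T)$ be a minimal system and $n,d\in\mathbb{N}$. Let $(x^1_i)_{i=1}^d,\dots,(x^n_i)_{i=1}^d\in N_d(T)$. If the point $((x^1_i)_{i=1}^d,\dots,(x^n_i)_{i=1}^d)\in X^{nd}$ is minimal for the diagonal action $T\times\cdots\times T$, then $((x^1_i)_{i=1}^d,\dots,(x^n_i)_{i=1}^d)$ is a minimal point of $((N_d(T))^n,\mathcal{G}_d(T))$ under the diagonal action of $\mathcal{G}_d(T)$.
   Context: $N_d(T)=\overline{\{(T^{p+q}x,\dots,T^{p+dq}x):x\in X,p,q\in\mathbb{Z}\}}\subset X^d$; $\mathcal{G}_d(T)=\langle T\times\cdots\times T,\ T\times T^2\times\cdots\times T^d\rangle$. A point is minimal if its orbit closure is a minimal set. *)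

theory Defs
  imports "HOL-Analysis.Analysis"
begin

definition tpow :: "('a \<Rightarrow> 'a) \<Rightarrow> int \<Rightarrow> 'a \<Rightarrow> 'a" where
  "tpow T k = (if 0 \<le> k then T ^^ nat k else inv T ^^ nat (- k))"

(* (X,T) topological dynamical system: X (the universe of type 'a) compact metric,
   T a homeomorphism of X; minimal: no proper nonempty closed invariant subset. *)
definition minimal_system :: "('a::metric_space \<Rightarrow> 'a) \<Rightarrow> bool" where
  "minimal_system T \<longleftrightarrow> compact (UNIV :: 'a set) \<and> homeomorphism UNIV UNIV T (inv T) \<and>
     (\<forall>Y. closed Y \<and> Y \<noteq> {} \<and> T ` Y \<subseteq> Y \<longrightarrow> Y = UNIV)"

(* Points of X^d are functions nat \<Rightarrow> 'a; coordinate i (0-based) is the paper's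
   coordinate i+1; coordinates i \<ge> d are 'undefined'. *)
definition Nd :: "('a::topological_space \<Rightarrow> 'a) \<Rightarrow> nat \<Rightarrow> (nat \<Rightarrow> 'a) set" where
  "Nd T d = closure {(\<lambda>i. if i < d then tpow T (p + q * int (Suc i)) x else undefined)
                      | x p q. True}"

(* Points of X^{nd} = (X^d)^n are functions z :: nat \<Rightarrow> nat \<Rightarrow> 'a, z j i = x^{j+1}_{i+1}.
   The element \<tau>^p \<sigma>^q of G_d(T) (\<tau> = T\<times>...\<times>T, \<sigma> = T\<times>T^2\<times>...\<times>T^d), acting
   diagonally on the n blocks; coordinates outside the range are left fixed. *)
definition gact :: "('a \<Rightarrow> 'a) \<Rightarrow> nat \<Rightarrow> nat \<Rightarrow> int \<Rightarrow> int \<Rightarrow> (nat \<Rightarrow> nat \<Rightarrow> 'a) \<Rightarrow> (nat \<Rightarrow> nat \<Rightarrow> 'a)" where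
  "gact T n d p q z = (\<lambda>j i. if j < n \<and> i < d then tpow T (p + q * int (Suc i)) (z j i) else z j i)"

definition Gd_diag :: "('a \<Rightarrow> 'a) \<Rightarrow> nat \<Rightarrow> nat \<Rightarrow> ((nat \<Rightarrow> nat \<Rightarrow> 'a) \<Rightarrow> (nat \<Rightarrow> nat \<Rightarrow> 'a)) set" where
  "Gd_diag T n d = {gact T n d p q | p q. True}"

definition Tdiag :: "('a \<Rightarrow> 'a) \<Rightarrow> nat \<Rightarrow> nat \<Rightarrow> ((nat \<Rightarrow> nat \<Rightarrow> 'a) \<Rightarrow> (nat \<Rightarrow> nat \<Rightarrow> 'a)) set" where
  "Tdiag T n d = {gact T n d p 0 | p. True}"

definition Nd_pow :: "('a::topological_space \<Rightarrow> 'a) \<Rightarrow> nat \<Rightarrow> nat \<Rightarrow> (nat \<Rightarrow> nat \<Rightarrow> 'a) set" where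
  "Nd_pow T n d = {z. (\<forall>j<n. z j \<in> Nd T d) \<and> (\<forall>j\<ge>n. z j = (\<lambda>i. undefined))}"

definition minimal_set :: "('b \<Rightarrow> 'b) set \<Rightarrow> 'b::topological_space set \<Rightarrow> bool" where
  "minimal_set A Y \<longleftrightarrow> Y \<noteq> {} \<and> closed Y \<and> (\<forall>g\<in>A. g ` Y \<subseteq> Y) \<and>
     (\<forall>Z. Z \<subseteq> Y \<and> Z \<noteq> {} \<and> closed Z \<and> (\<forall>g\<in>A. g ` Z \<subseteq> Z) \<longrightarrow> Z = Y)"

definition orbit :: "('b \<Rightarrow> 'b) set \<Rightarrow> 'b \<Rightarrow> 'b set" where
  "orbit A z = {g z | g. g \<in> A}"

definition minimal_point :: "('b \<Rightarrow> 'b) set \<Rightarrow> 'b::topological_space \<Rightarrow> bool" where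
  "minimal_point A z \<longleftrightarrow> minimal_set A (closure (orbit A z))"

end

theory Submission imports Defs begin

lemma Hausdorff_fun:
  assumes "Hausdorff_space (euclidean :: 'b::topological_space topology)"
  shows "Hausdorff_space (euclidean :: ('c \<Rightarrow> 'b) topology)"
proof -
  have "Hausdorff_space (product_topology (\<lambda>i::'c. (euclidean::'b topology)) UNIV)"
    using assms by (simp add: Hausdorff_space_product_topology)
  then show ?thesis by (simp add: euclidean_product_topology)
qed

lemma cont_proj2: "continuous_on UNIV (\<lambda>f::'c \<Rightarrow> 'd \<Rightarrow> 'b::topological_space. f i y)"
  by (rule continuous_on_product_then_coordinatewise[OF continuous_on_product_coordinates])

lemma compact_UNIV_fun:
  assumes "compact (UNIV :: 'b::topological_space set)"
  shows "compact (UNIV :: ('c \<Rightarrow> 'b) set)"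
proof -
  have "compact_space (euclidean :: 'b topology)"
    using assms by (simp add: compact_space_def compactin_euclidean_iff)
  then have "compact_space (product_topology (\<lambda>i::'c. (euclidean :: 'b topology)) UNIV)"
    by (simp add: compact_space_product_topology)
  then have "compact_space (euclidean :: ('c \<Rightarrow> 'b) topology)"
    by (simp add: euclidean_product_topology)
  then show ?thesis by (simp add: compact_space_def compactin_euclidean_iff)
qed

lemma H_compact_closed:
  assumes "Hausdorff_space (euclidean :: 'b::topological_space topology)" "compact (K::'b set)"
  shows "closed K"
  using assms compactin_imp_closedin closed_closedin compactin_euclidean_iff by blast

lemma H_closed_singleton:
  assumes "Hausdorff_space (euclidean :: 'b::topological_space topology)"
  shows "closed {x::'b}"
  using assms Hausdorff_imp_t1_space t1_space_closedin_singleton closed_closedin by fastforce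

lemma cont_rcomp: "continuous_on UNIV (\<lambda>a::'c \<Rightarrow> 'b::topological_space. a \<circ> b)"
  by (rule continuous_on_coordinatewise_then_product) simp

lemma cont_lcomp:
  assumes "continuous_on UNIV (g::'b::topological_space \<Rightarrow> 'b)"
  shows "continuous_on UNIV (\<lambda>a::'c \<Rightarrow> 'b. g \<circ> a)"
proof (rule continuous_on_coordinatewise_then_product)
  fix i
  show "continuous_on UNIV (\<lambda>a::'c \<Rightarrow> 'b. (g \<circ> a) i)"
    using continuous_on_compose2[OF assms continuous_on_product_coordinates[of i]] by (simp add: o_def)
qed

definition act :: "nat \<Rightarrow> nat \<Rightarrow> (nat \<Rightarrow> 'a \<Rightarrow> 'a) \<Rightarrow> (nat \<Rightarrow> nat \<Rightarrow> 'a) \<Rightarrow> (nat \<Rightarrow> nat \<Rightarrow> 'a)" where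
  "act n d f w = (\<lambda>j i. if j < n \<and> i < d then f i (w j i) else w j i)"

lemma act_cont_f: "continuous_on UNIV (\<lambda>f. act n d f (w :: nat \<Rightarrow> nat \<Rightarrow> 'a::topological_space))"
  unfolding act_def
proof (intro continuous_on_coordinatewise_then_product)
  fix j i
  show "continuous_on UNIV (\<lambda>f. if j < n \<and> i < d then f i (w j i) else w j i)"
  proof (cases "j < n \<and> i < d")
    case True
    have "continuous_on UNIV (\<lambda>f::nat \<Rightarrow> 'a \<Rightarrow> 'a. f i (w j i))"
      by (rule cont_proj2)
    then show ?thesis using True by simp
  next
    case False
    then show ?thesis by (simp only: if_not_P[OF False] if_False continuous_on_const)
  qed
qed

lemma act_cont_w:
  assumes "\<And>i. continuous_on UNIV (f i :: 'a::topological_space \<Rightarrow> 'a)"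
  shows "continuous_on UNIV (act n d f)"
  unfolding act_def
proof (intro continuous_on_coordinatewise_then_product)
  fix j i
  show "continuous_on UNIV (\<lambda>w::nat \<Rightarrow> nat \<Rightarrow> 'a. if j < n \<and> i < d then f i (w j i) else w j i)"
  proof (cases "j < n \<and> i < d")
    case True
    have "continuous_on UNIV (\<lambda>w::nat \<Rightarrow> nat \<Rightarrow> 'a. w j i)"
      by (rule cont_proj2)
    then have "continuous_on UNIV (\<lambda>w::nat \<Rightarrow> nat \<Rightarrow> 'a. f i (w j i))"
      using continuous_on_compose2[OF assms] by blast
    then show ?thesis using True by simp
  next
    case False
    have "continuous_on UNIV (\<lambda>w::nat \<Rightarrow> nat \<Rightarrow> 'a. w j i)"
      by (rule cont_proj2)
    then show ?thesis by (simp only: if_not_P[OF False])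
  qed
qed

lemma finite_chain_min:
  assumes "finite F" "F \<noteq> {}" "\<forall>A\<in>F. \<forall>B\<in>F. A \<subseteq> B \<or> B \<subseteq> A"
  shows "\<exists>m\<in>F. \<forall>A\<in>F. m \<subseteq> (A::'b set)"
  using assms
proof (induction F rule: finite_ne_induct)
  case (singleton x) then show ?case by auto
next
  case (insert x F)
  then obtain m where m: "m \<in> F" "\<forall>A\<in>F. m \<subseteq> A" by auto
  show ?case
  proof (cases "x \<subseteq> m")
    case True then show ?thesis using m by (intro bexI[of _ x]) auto
  next
    case False then have "m \<subseteq> x" using insert.prems m by auto
    then show ?thesis using m by (intro bexI[of _ m]) auto
  qed
qed

lemma zorn_min_closed:
  fixes P :: "'b::topological_space set \<Rightarrow> bool"
  assumes S: "compact S"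
  and P: "\<And>A. P A \<Longrightarrow> closed A \<and> A \<noteq> {} \<and> A \<subseteq> S"
  and ch: "\<And>C. C \<noteq> {} \<Longrightarrow> (\<forall>A\<in>C. P A) \<Longrightarrow> (\<forall>A\<in>C. \<forall>B\<in>C. A \<subseteq> B \<or> B \<subseteq> A) \<Longrightarrow> \<Inter>C \<noteq> {} \<Longrightarrow> P (\<Inter>C)"
  and A0: "P A0"
  shows "\<exists>A. P A \<and> A \<subseteq> A0 \<and> (\<forall>B. P B \<and> B \<subseteq> A \<longrightarrow> B = A)"
proof -
  have PA0: "closed A0 \<and> A0 \<noteq> {} \<and> A0 \<subseteq> S" using P[OF A0] .
  define F where "F = {A. P A \<and> A \<subseteq> A0}"
  define G where "G = uminus ` F"
  have memG: "X \<in> G \<longleftrightarrow> -X \<in> F" for X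
    unfolding G_def by (metis double_complement image_iff)
  have "\<exists>M\<in>G. \<forall>X\<in>G. M \<subseteq> X \<longrightarrow> X = M"
  proof (rule subset_Zorn)
    fix C assume C: "subset.chain G C"
    have C1: "C \<subseteq> G" and C2: "\<forall>X\<in>C. \<forall>Y\<in>C. X \<subseteq> Y \<or> Y \<subseteq> X"
      using C by (simp_all add: subset_chain_def)
    show "\<exists>U\<in>G. \<forall>X\<in>C. X \<subseteq> U"
    proof (cases "C = {}")
      case True
      have "-A0 \<in> G" unfolding memG F_def using A0 by simp
      then show ?thesis using True by blast
    next
      case False
      define D where "D = uminus ` C"
      have memD: "A \<in> D \<longleftrightarrow> -A \<in> C" for A
        unfolding D_def by (metis double_complement image_iff)
      have D: "P A \<and> A \<subseteq> A0" if "A \<in> D" for A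
      proof -
        have "-A \<in> G" using that C1 memD by blast
        then show ?thesis using memG F_def by simp
      qed
      have Dch: "A \<subseteq> B \<or> B \<subseteq> A" if "A \<in> D" "B \<in> D" for A B
      proof -
        have "-A \<in> C" "-B \<in> C" using that memD by simp_all
        then have "-A \<subseteq> -B \<or> -B \<subseteq> -A" using C2 by blast
        then show ?thesis by blast
      qed
      have Dne: "D \<noteq> {}" using False unfolding D_def by simp
      have "S \<inter> \<Inter>D \<noteq> {}"
      proof (rule compact_imp_fip[OF S])
        show "closed T" if "T \<in> D" for T using D[OF that] P by blast
        fix F' assume F': "finite F'" "F' \<subseteq> D"
        show "S \<inter> \<Inter>F' \<noteq> {}"
        proof (cases "F' = {}")
          case True then show ?thesis using PA0 by auto
        next
          case False
          have "\<forall>A\<in>F'. \<forall>B\<in>F'. A \<subseteq> B \<or> B \<subseteq> A"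
            using Dch F'(2) by (meson subsetD)
          then obtain m where m: "m \<in> F'" "\<forall>A\<in>F'. m \<subseteq> A"
            using finite_chain_min[OF F'(1) False] by blast
          then have "\<Inter>F' = m" by blast
          moreover have "P m" using m(1) F'(2) D by (meson subsetD)
          ultimately show ?thesis using P[of m] by blast
        qed
      qed
      then have ne: "\<Inter>D \<noteq> {}" by blast
      have "P (\<Inter>D)" by (rule ch[OF Dne _ _ ne]) (use D Dch in blast)+
      moreover have "\<Inter>D \<subseteq> A0" using Dne D by blast
      ultimately have "-(\<Inter>D) \<in> G" unfolding memG F_def by simp
      moreover have "X \<subseteq> -(\<Inter>D)" if "X \<in> C" for X
      proof -
        have "-X \<in> D" using that memD by simp
        then show ?thesis by blast
      qed
      ultimately show ?thesis by blast
    qed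
  qed
  then obtain M where M: "M \<in> G" "\<forall>X\<in>G. M \<subseteq> X \<longrightarrow> X = M" by blast
  define A where "A = -M"
  have A: "P A" "A \<subseteq> A0" using M(1) unfolding memG F_def A_def by simp_all
  have "\<forall>B. P B \<and> B \<subseteq> A \<longrightarrow> B = A"
  proof (intro allI impI)
    fix B assume B: "P B \<and> B \<subseteq> A"
    then have "-B \<in> G" unfolding memG F_def using A by auto
    moreover have "M \<subseteq> -B" using B unfolding A_def by blast
    ultimately have "-B = M" using M by blast
    then show "B = A" unfolding A_def by auto
  qed
  then show ?thesis using A by blast
qed

locale rts =
  fixes S :: "'b::topological_space set" and mult :: "'b \<Rightarrow> 'b \<Rightarrow> 'b"
  assumes haus: "Hausdorff_space (euclidean :: 'b topology)"
  and S_compact: "compact S"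
  and mult_closed: "\<And>a b. a \<in> S \<Longrightarrow> b \<in> S \<Longrightarrow> mult a b \<in> S"
  and assoc: "\<And>a b c. a \<in> S \<Longrightarrow> b \<in> S \<Longrightarrow> c \<in> S \<Longrightarrow> mult (mult a b) c = mult a (mult b c)"
  and cont: "\<And>b. b \<in> S \<Longrightarrow> continuous_on S (\<lambda>a. mult a b)"
begin

definition left_ideal where
  "left_ideal I \<longleftrightarrow> I \<noteq> {} \<and> I \<subseteq> S \<and> (\<forall>s\<in>S. \<forall>a\<in>I. mult s a \<in> I)"

definition min_left_ideal where
  "min_left_ideal L \<longleftrightarrow> left_ideal L \<and> (\<forall>I. left_ideal I \<and> I \<subseteq> L \<longrightarrow> I = L)"

lemma closed_sub_compact: "closed A \<Longrightarrow> A \<subseteq> S \<Longrightarrow> compact A"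
  using compact_Int_closed[OF S_compact, of A] by (simp add: Int_absorb1)

lemma Sa_compact: "a \<in> S \<Longrightarrow> compact ((\<lambda>s. mult s a) ` S)"
  by (rule compact_continuous_image[OF cont S_compact])

lemma Sa_closed: "a \<in> S \<Longrightarrow> closed ((\<lambda>s. mult s a) ` S)"
  by (rule H_compact_closed[OF haus Sa_compact])

lemma Sa_left_ideal:
  assumes aS: "a \<in> S"
  shows "left_ideal ((\<lambda>s. mult s a) ` S)"
  unfolding left_ideal_def
proof (intro conjI ballI)
  show "(\<lambda>s. mult s a) ` S \<noteq> {}" using aS by auto
  show "(\<lambda>s. mult s a) ` S \<subseteq> S" using aS mult_closed by auto
  fix s x assume s: "s \<in> S" and x: "x \<in> (\<lambda>s. mult s a) ` S"
  then obtain t where t: "t \<in> S" "x = mult t a" by auto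
  have "mult s x = mult (mult s t) a" using assoc[OF s t(1) aS] t(2) by simp
  moreover have "mult s t \<in> S" using mult_closed[OF s t(1)] .
  ultimately show "mult s x \<in> (\<lambda>s. mult s a) ` S" by simp
qed

lemma idempotent_exists:
  assumes A_sub: "A \<subseteq> S" and A_closed: "closed A" and A_ne: "A \<noteq> {}"
    and A_mult: "\<forall>a\<in>A. \<forall>b\<in>A. mult a b \<in> A"
  shows "\<exists>e\<in>A. mult e e = e"
proof -
  define P where "P = (\<lambda>B. closed B \<and> B \<noteq> {} \<and> B \<subseteq> A \<and> (\<forall>a\<in>B. \<forall>b\<in>B. mult a b \<in> B))"
  have "\<exists>B. P B \<and> B \<subseteq> A \<and> (\<forall>B'. P B' \<and> B' \<subseteq> B \<longrightarrow> B' = B)"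
  proof (rule zorn_min_closed[OF S_compact])
    show "closed B \<and> B \<noteq> {} \<and> B \<subseteq> S" if "P B" for B
      using that A_sub unfolding P_def by auto
    show "P A" unfolding P_def using A_closed A_ne A_mult by simp
    fix C assume C: "C \<noteq> {}" "\<forall>B\<in>C. P B" "\<forall>A\<in>C. \<forall>B\<in>C. A \<subseteq> B \<or> B \<subseteq> A" "\<Inter>C \<noteq> {}"
    have "closed (\<Inter>C)" using C(2) unfolding P_def by (simp add: closed_Inter)
    moreover have "\<Inter>C \<subseteq> A" using C(1,2) unfolding P_def by auto
    moreover have "\<forall>a\<in>\<Inter>C. \<forall>b\<in>\<Inter>C. mult a b \<in> \<Inter>C"
      using C(2) unfolding P_def by simp
    ultimately show "P (\<Inter>C)" using C(4) unfolding P_def by simp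
  qed
  then obtain B where PB: "P B" and Bmin: "\<forall>B'. P B' \<and> B' \<subseteq> B \<longrightarrow> B' = B" by auto
  have Bcl: "closed B" and Bne: "B \<noteq> {}" and BA: "B \<subseteq> A" and Bm: "\<forall>a\<in>B. \<forall>b\<in>B. mult a b \<in> B"
    using PB unfolding P_def by auto
  obtain a where a: "a \<in> B" using Bne by auto
  have BS: "B \<subseteq> S" using BA A_sub by simp
  have aS: "a \<in> S" using a BS by auto
  have cB: "compact B" using closed_sub_compact[OF Bcl BS] .
  define Ba where "Ba = (\<lambda>s. mult s a) ` B"
  have "compact Ba"
    unfolding Ba_def using compact_continuous_image[OF continuous_on_subset[OF cont[OF aS] BS] cB] .
  then have c1: "closed Ba" using H_compact_closed[OF haus] by auto
  have c2: "Ba \<noteq> {}" using a unfolding Ba_def by auto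
  have c3: "Ba \<subseteq> B" using Bm a unfolding Ba_def by auto
  have c4: "\<forall>x\<in>Ba. \<forall>y\<in>Ba. mult x y \<in> Ba"
  proof (intro ballI)
    fix x y assume "x \<in> Ba" "y \<in> Ba"
    then obtain s t where st: "s \<in> B" "t \<in> B" "x = mult s a" "y = mult t a" unfolding Ba_def by auto
    have xB: "x \<in> B" using st(1,3) a Bm by auto
    have xS: "x \<in> S" and tS: "t \<in> S" using xB st(2) BS by auto
    have "mult x y = mult (mult x t) a" using assoc[OF xS tS aS] st(4) by simp
    moreover have "mult x t \<in> B" using xB st(2) Bm by auto
    ultimately show "mult x y \<in> Ba" unfolding Ba_def by auto
  qed
  have "P Ba" unfolding P_def using c1 c2 c3 c4 BA by auto
  then have Ba: "Ba = B" using Bmin c3 by auto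
  define D where "D = B \<inter> (\<lambda>s. mult s a) -` {a}"
  have d1: "closed D"
    unfolding D_def using continuous_closed_preimage[OF continuous_on_subset[OF cont[OF aS] BS] Bcl H_closed_singleton[OF haus]] .
  have d2: "D \<noteq> {}"
  proof -
    have "a \<in> Ba" using a Ba by simp
    then obtain b where "b \<in> B" "mult b a = a" unfolding Ba_def by auto
    then show ?thesis unfolding D_def by auto
  qed
  have d3: "D \<subseteq> B" unfolding D_def by auto
  have d4: "\<forall>x\<in>D. \<forall>y\<in>D. mult x y \<in> D"
  proof (intro ballI)
    fix x y assume xy: "x \<in> D" "y \<in> D"
    then have xyB: "x \<in> B" "y \<in> B" and e: "mult x a = a" "mult y a = a" unfolding D_def by auto
    have "mult (mult x y) a = mult x (mult y a)" using assoc[of x y a] xyB BS aS by auto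
    also have "\<dots> = a" using e by simp
    finally show "mult x y \<in> D" using xyB Bm unfolding D_def by auto
  qed
  have "P D" unfolding P_def using d1 d2 d3 d4 BA by auto
  then have "D = B" using Bmin d3 by auto
  then have "mult a a = a" using a unfolding D_def by auto
  then show ?thesis using a BA by auto
qed

lemma min_left_ideal_gen:
  assumes L: "min_left_ideal L" and v: "v \<in> L"
  shows "(\<lambda>s. mult s v) ` S = L"
proof -
  have LI: "left_ideal L" using L unfolding min_left_ideal_def by auto
  then have vS: "v \<in> S" using v unfolding left_ideal_def by auto
  have sub: "(\<lambda>s. mult s v) ` S \<subseteq> L" using LI v unfolding left_ideal_def by auto
  have "\<forall>I. left_ideal I \<and> I \<subseteq> L \<longrightarrow> I = L" using L unfolding min_left_ideal_def by auto
  then show ?thesis using Sa_left_ideal[OF vS] sub by auto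
qed

lemma min_left_ideal_closed:
  assumes L: "min_left_ideal L" shows "closed L"
proof -
  have "L \<noteq> {}" "L \<subseteq> S" using L unfolding min_left_ideal_def left_ideal_def by auto
  then obtain v where v: "v \<in> L" "v \<in> S" by auto
  show ?thesis using min_left_ideal_gen[OF L v(1)] Sa_closed[OF v(2)] by simp
qed

lemma min_left_ideal_left_ideal: "min_left_ideal L \<Longrightarrow> left_ideal L"
  unfolding min_left_ideal_def by auto

lemma exists_min_left_ideal:
  assumes J: "left_ideal J"
  shows "\<exists>L. min_left_ideal L \<and> L \<subseteq> J"
proof -
  obtain a where a: "a \<in> J" using J unfolding left_ideal_def by auto
  have aS: "a \<in> S" using a J unfolding left_ideal_def by auto
  define P where "P = (\<lambda>B. closed B \<and> left_ideal B)"
  have "\<exists>B. P B \<and> B \<subseteq> (\<lambda>s. mult s a) ` S \<and> (\<forall>B'. P B' \<and> B' \<subseteq> B \<longrightarrow> B' = B)"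
  proof (rule zorn_min_closed[OF S_compact])
    show "closed B \<and> B \<noteq> {} \<and> B \<subseteq> S" if "P B" for B
      using that unfolding P_def left_ideal_def by auto
    show "P ((\<lambda>s. mult s a) ` S)" unfolding P_def using Sa_closed[OF aS] Sa_left_ideal[OF aS] by simp
    fix C assume C: "C \<noteq> {}" "\<forall>B\<in>C. P B" "\<forall>A\<in>C. \<forall>B\<in>C. A \<subseteq> B \<or> B \<subseteq> A" "\<Inter>C \<noteq> {}"
    have "closed (\<Inter>C)" using C(2) unfolding P_def by (simp add: closed_Inter)
    moreover have "\<Inter>C \<subseteq> S" using C(1,2) unfolding P_def left_ideal_def by auto
    moreover have "\<forall>s\<in>S. \<forall>x\<in>\<Inter>C. mult s x \<in> \<Inter>C"
      using C(2) unfolding P_def left_ideal_def by simp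
    ultimately show "P (\<Inter>C)" using C(4) unfolding P_def left_ideal_def by simp
  qed
  then obtain L where PL: "P L" and LSa: "L \<subseteq> (\<lambda>s. mult s a) ` S"
    and Lmin: "\<forall>B'. P B' \<and> B' \<subseteq> L \<longrightarrow> B' = L" by auto
  have "min_left_ideal L"
    unfolding min_left_ideal_def
  proof (intro conjI allI impI)
    show "left_ideal L" using PL unfolding P_def by auto
    fix I assume I: "left_ideal I \<and> I \<subseteq> L"
    then obtain b where b: "b \<in> I" unfolding left_ideal_def by auto
    then have bS: "b \<in> S" using I unfolding left_ideal_def by auto
    have sub: "(\<lambda>s. mult s b) ` S \<subseteq> I" using I b unfolding left_ideal_def by auto
    have "P ((\<lambda>s. mult s b) ` S)" unfolding P_def using Sa_closed[OF bS] Sa_left_ideal[OF bS] by simp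
    then have "(\<lambda>s. mult s b) ` S = L" using Lmin sub I by auto
    then show "I = L" using I sub by auto
  qed
  moreover have "(\<lambda>s. mult s a) ` S \<subseteq> J" using J a unfolding left_ideal_def by auto
  ultimately show ?thesis using LSa by (meson order_trans)
qed

lemma idempotent_below:
  assumes eS: "e \<in> S" and ee: "mult e e = e"
  shows "\<exists>L f. min_left_ideal L \<and> f \<in> L \<and> mult f f = f \<and> mult e f = f \<and> mult f e = f"
proof -
  obtain L where L: "min_left_ideal L" and LSe: "L \<subseteq> (\<lambda>s. mult s e) ` S"
    using exists_min_left_ideal[OF Sa_left_ideal[OF eS]] by auto
  have LI: "left_ideal L" using L unfolding min_left_ideal_def by auto
  have LS: "L \<subseteq> S" and Lne: "L \<noteq> {}" and Lid: "\<forall>s\<in>S. \<forall>a\<in>L. mult s a \<in> L"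
    using LI unfolding left_ideal_def by auto
  have Lm: "\<forall>a\<in>L. \<forall>b\<in>L. mult a b \<in> L" using Lid LS by auto
  obtain w where w: "w \<in> L" "mult w w = w"
    using idempotent_exists[OF LS min_left_ideal_closed[OF L] Lne Lm] by auto
  have wS: "w \<in> S" using w LS by auto
  have we: "mult w e = w"
  proof -
    obtain s where s: "s \<in> S" "w = mult s e" using w(1) LSe by auto
    then have "mult w e = mult s (mult e e)" using assoc[OF s(1) eS eS] by simp
    then show ?thesis using ee s by simp
  qed
  define f where "f = mult e w"
  have fL: "f \<in> L" using Lid eS w(1) unfolding f_def by auto
  have "mult f f = mult e (mult w (mult e w))"
    unfolding f_def using assoc[of e w "mult e w"] eS wS mult_closed by auto
  also have "mult w (mult e w) = mult (mult w e) w" using assoc[OF wS eS wS] by simp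
  finally have ff: "mult f f = f" using we w(2) unfolding f_def by simp
  have ef: "mult e f = f" unfolding f_def using assoc[OF eS eS wS] ee by simp
  have fe: "mult f e = f" unfolding f_def using assoc[OF eS wS eS] we by simp
  show ?thesis using L fL ff ef fe by auto
qed

lemma min_idem_unique:
  assumes L: "min_left_ideal L" and u: "u \<in> L" and vS: "v \<in> S" and vv: "mult v v = v"
    and uv: "mult u v = v" and vu: "mult v u = v"
  shows "v = u"
proof -
  have LI: "left_ideal L" using L unfolding min_left_ideal_def by auto
  have vL: "v \<in> L" using LI vS u vu unfolding left_ideal_def by metis
  obtain s where s: "s \<in> S" "u = mult s v" using min_left_ideal_gen[OF L vL] u by auto
  have "mult u v = mult s (mult v v)" using s assoc[OF s(1) vS vS] by simp
  then have "mult u v = u" using s vv by simp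
  then show ?thesis using uv by simp
qed

end

lemma funpow_cont:
  assumes "continuous_on UNIV (f :: 'b::topological_space \<Rightarrow> 'b)"
  shows "continuous_on UNIV (f ^^ n)"
proof (induction n)
  case 0 then show ?case by (simp add: continuous_on_id)
next
  case (Suc n)
  have "continuous_on UNIV (\<lambda>x. f ((f ^^ n) x))"
    using continuous_on_compose2[OF assms Suc.IH] by simp
  then show ?case by (simp add: comp_def)
qed

lemma tpow_0: "tpow T 0 = id"
  by (simp add: tpow_def)

lemma tpow_cont:
  assumes "homeomorphism UNIV UNIV T (inv T)"
  shows "continuous_on UNIV (tpow T k)"
proof -
  have "continuous_on UNIV T" "continuous_on UNIV (inv T)"
    using assms unfolding homeomorphism_def by auto
  then show ?thesis unfolding tpow_def using funpow_cont by auto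
qed

lemma tpow_succ:
  assumes TI: "\<And>y. T (inv T y) = y"
  shows "tpow T (k + 1) = T \<circ> tpow T k"
proof (cases "0 \<le> k")
  case True
  then have "nat (k + 1) = Suc (nat k)" by simp
  then show ?thesis using True unfolding tpow_def by simp
next
  case False
  define m where "m = nat (- (k + 1))"
  have k: "nat (- k) = Suc m" using False unfolding m_def by simp
  have "tpow T (k + 1) = inv T ^^ m"
  proof (cases "k + 1 = 0")
    case True then show ?thesis unfolding tpow_def m_def by simp
  next
    case False2: False
    then have "\<not> 0 \<le> k + 1" using False by simp
    then show ?thesis unfolding tpow_def m_def by simp
  qed
  moreover have "tpow T k = inv T \<circ> (inv T ^^ m)" using False k unfolding tpow_def by simp
  ultimately show ?thesis using TI by (simp add: fun_eq_iff)
qed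

lemma tpow_pred:
  assumes TI: "\<And>y. T (inv T y) = y" and IT: "\<And>x. inv T (T x) = x"
  shows "tpow T (k - 1) = inv T \<circ> tpow T k"
proof -
  have "tpow T k = tpow T ((k - 1) + 1)" by simp
  also have "\<dots> = T \<circ> tpow T (k - 1)" by (rule tpow_succ[OF TI])
  finally show ?thesis using IT by (simp add: fun_eq_iff)
qed

lemma tpow_add:
  assumes TI: "\<And>y. T (inv T y) = y" and IT: "\<And>x. inv T (T x) = x"
  shows "tpow T (a + b) = tpow T a \<circ> tpow T b"
proof (induction a rule: int_induct[where k = 0])
  case base then show ?case by (simp add: tpow_0)
next
  case (step1 i)
  have "tpow T (i + 1 + b) = tpow T ((i + b) + 1)" by (simp add: algebra_simps)
  also have "\<dots> = T \<circ> tpow T (i + b)" by (rule tpow_succ[OF TI])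
  also have "\<dots> = (T \<circ> tpow T i) \<circ> tpow T b" by (simp only: step1.IH o_assoc)
  also have "\<dots> = tpow T (i + 1) \<circ> tpow T b" by (simp add: tpow_succ[OF TI])
  finally show ?case .
next
  case (step2 i)
  have "tpow T (i - 1 + b) = tpow T ((i + b) - 1)" by (simp add: algebra_simps)
  also have "\<dots> = inv T \<circ> tpow T (i + b)" by (rule tpow_pred[OF TI IT])
  also have "\<dots> = (inv T \<circ> tpow T i) \<circ> tpow T b" by (simp only: step2.IH o_assoc)
  also have "\<dots> = tpow T (i - 1) \<circ> tpow T b" by (simp add: tpow_pred[OF TI IT])
  finally show ?case .
qed

definition gel :: "('a \<Rightarrow> 'a) \<Rightarrow> int \<Rightarrow> int \<Rightarrow> nat \<Rightarrow> 'a \<Rightarrow> 'a" where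
  "gel T p q = (\<lambda>i. tpow T (p + q * int (Suc i)))"

definition pmul :: "(nat \<Rightarrow> 'a \<Rightarrow> 'a) \<Rightarrow> (nat \<Rightarrow> 'a \<Rightarrow> 'a) \<Rightarrow> (nat \<Rightarrow> 'a \<Rightarrow> 'a)" where
  "pmul f g = (\<lambda>i. f i \<circ> g i)"

lemma gact_eq: "gact T n d p q = act n d (gel T p q)"
  by (simp add: gact_def act_def gel_def fun_eq_iff)

lemma act_act: "act n d f (act n d g w) = act n d (pmul f g) w"
  by (simp add: act_def pmul_def fun_eq_iff)

lemma gel_mult:
  assumes TI: "\<And>y. T (inv T y) = y" and IT: "\<And>x. inv T (T x) = x"
  shows "pmul (gel T p q) (gel T p' q') = gel T (p + p') (q + q')"
proof -
  have "tpow T (p + q * int (Suc i)) \<circ> tpow T (p' + q' * int (Suc i)) = tpow T (p + p' + (q + q') * int (Suc i))" for i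
    using tpow_add[OF TI IT, of "p + q * int (Suc i)" "p' + q' * int (Suc i)"] by (simp add: algebra_simps)
  then show ?thesis unfolding pmul_def gel_def by simp
qed

lemma closure_mult_closed:
  fixes m :: "'b::topological_space \<Rightarrow> 'b \<Rightarrow> 'b"
  assumes G: "\<And>a b. a \<in> G \<Longrightarrow> b \<in> G \<Longrightarrow> m a b \<in> G"
    and lc: "\<And>a. a \<in> G \<Longrightarrow> continuous_on UNIV (m a)"
    and rc: "\<And>b. continuous_on UNIV (\<lambda>a. m a b)"
    and a: "a \<in> closure G" and b: "b \<in> closure G"
  shows "m a b \<in> closure G"
proof -
  have 1: "m g c \<in> closure G" if g: "g \<in> G" and c: "c \<in> closure G" for g c
  proof -
    have "m g ` G \<subseteq> closure G" using G g closure_subset by blast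
    then have "m g ` closure G \<subseteq> closure G"
      by (rule image_closure_subset[OF continuous_on_subset[OF lc[OF g] subset_UNIV] closed_closure])
    then show ?thesis using c by blast
  qed
  have "(\<lambda>x. m x b) ` G \<subseteq> closure G" using 1 b by blast
  then have "(\<lambda>x. m x b) ` closure G \<subseteq> closure G"
    by (rule image_closure_subset[OF continuous_on_subset[OF rc subset_UNIV] closed_closure])
  then show ?thesis using a by blast
qed

lemma cont_const_fun: "continuous_on UNIV (\<lambda>a::'b::topological_space. (\<lambda>i::'c. a))"
  by (rule continuous_on_coordinatewise_then_product) (simp add: continuous_on_id)

lemma cont_pmul_r: "continuous_on UNIV (\<lambda>f. pmul f (b :: nat \<Rightarrow> 'b::topological_space \<Rightarrow> 'b))"
  unfolding pmul_def
proof (rule continuous_on_coordinatewise_then_product)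
  fix i
  show "continuous_on UNIV (\<lambda>f::nat \<Rightarrow> 'b \<Rightarrow> 'b. f i \<circ> b i)"
    using continuous_on_compose2[OF cont_rcomp continuous_on_product_coordinates[of i]] by simp
qed

lemma cont_pmul_l:
  assumes "\<And>i. continuous_on UNIV (g i :: 'b::topological_space \<Rightarrow> 'b)"
  shows "continuous_on UNIV (\<lambda>f. pmul g f)"
  unfolding pmul_def
proof (rule continuous_on_coordinatewise_then_product)
  fix i
  show "continuous_on UNIV (\<lambda>f::nat \<Rightarrow> 'b \<Rightarrow> 'b. g i \<circ> f i)"
    using continuous_on_compose2[OF cont_lcomp[OF assms] continuous_on_product_coordinates[of i]] by simp
qed

lemma rts_E1:
  fixes T :: "'a::metric_space \<Rightarrow> 'a"
  assumes cpt: "compact (UNIV :: 'a set)" and hT: "homeomorphism UNIV UNIV T (inv T)"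
  shows "rts (closure (range (tpow T))) (\<circ>)"
proof -
  have TI: "\<And>y. T (inv T y) = y" and IT: "\<And>x. inv T (T x) = x"
    using hT unfolding homeomorphism_def by auto
  show ?thesis
  proof
    show "Hausdorff_space (euclidean :: ('a \<Rightarrow> 'a) topology)"
      by (rule Hausdorff_fun) simp
    show "compact (closure (range (tpow T)))"
      using compact_Int_closed[OF compact_UNIV_fun[OF cpt] closed_closure, of "range (tpow T)"] by simp
    show "a \<circ> b \<in> closure (range (tpow T))" if "a \<in> closure (range (tpow T))" "b \<in> closure (range (tpow T))" for a b
    proof (rule closure_mult_closed[OF _ _ _ that])
      show "x \<circ> y \<in> range (tpow T)" if xy: "x \<in> range (tpow T)" "y \<in> range (tpow T)" for x y
      proof -
        obtain i j where ij: "x = tpow T i" "y = tpow T j" using xy by auto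
        have "x \<circ> y = tpow T (i + j)" using ij tpow_add[OF TI IT] by simp
        then show ?thesis by simp
      qed
      show "continuous_on UNIV ((\<circ>) x :: ('a \<Rightarrow> 'a) \<Rightarrow> ('a \<Rightarrow> 'a))" if xr: "x \<in> range (tpow T)" for x
      proof -
        obtain k where k: "x = tpow T k" using xr by auto
        have "continuous_on UNIV (\<lambda>a::'a \<Rightarrow> 'a. tpow T k \<circ> a)"
          by (rule cont_lcomp[OF tpow_cont[OF hT]])
        then show ?thesis using k by simp
      qed
      show "continuous_on UNIV (\<lambda>x::'a \<Rightarrow> 'a. x \<circ> y)" for y by (rule cont_rcomp)
    qed
    show "a \<circ> b \<circ> c = a \<circ> (b \<circ> c)" for a b c :: "'a \<Rightarrow> 'a" by (simp add: comp_assoc)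
    show "continuous_on (closure (range (tpow T))) (\<lambda>a. a \<circ> b)" for b
      by (rule continuous_on_subset[OF cont_rcomp]) simp
  qed
qed

lemma rts_Ed:
  fixes T :: "'a::metric_space \<Rightarrow> 'a"
  assumes cpt: "compact (UNIV :: 'a set)" and hT: "homeomorphism UNIV UNIV T (inv T)"
  shows "rts (closure ({gel T p q | p q. True})) pmul"
proof -
  have TI: "\<And>y. T (inv T y) = y" and IT: "\<And>x. inv T (T x) = x"
    using hT unfolding homeomorphism_def by auto
  let ?G = "{gel T p q | p q. True}"
  show ?thesis
  proof
    show "Hausdorff_space (euclidean :: (nat \<Rightarrow> 'a \<Rightarrow> 'a) topology)"
      by (rule Hausdorff_fun) (rule Hausdorff_fun, simp)
    show "compact (closure ?G)"
      using compact_Int_closed[OF compact_UNIV_fun[OF compact_UNIV_fun[OF cpt]] closed_closure, of ?G] by simp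
    show "pmul a b \<in> closure ?G" if "a \<in> closure ?G" "b \<in> closure ?G" for a b
    proof (rule closure_mult_closed[OF _ _ _ that])
      show "pmul x y \<in> ?G" if xy: "x \<in> ?G" "y \<in> ?G" for x y
      proof -
        obtain p q p' q' where "x = gel T p q" "y = gel T p' q'" using xy by blast
        then have "pmul x y = gel T (p + p') (q + q')" using gel_mult[OF TI IT] by simp
        then show ?thesis by blast
      qed
      show "continuous_on UNIV (pmul x)" if xG: "x \<in> ?G" for x
      proof -
        obtain p q where "x = gel T p q" using xG by blast
        then show ?thesis using cont_pmul_l[of x] tpow_cont[OF hT] unfolding gel_def by auto
      qed
      show "continuous_on UNIV (\<lambda>x. pmul x y)" for y by (rule cont_pmul_r)
    qed
    show "pmul (pmul a b) c = pmul a (pmul b c)" for a b c :: "nat \<Rightarrow> 'a \<Rightarrow> 'a"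
      by (simp add: pmul_def comp_assoc)
    show "continuous_on (closure ?G) (\<lambda>a. pmul a b)" for b
      by (rule continuous_on_subset[OF cont_pmul_r]) simp
  qed
qed

theorem lemma5p8:
  fixes T :: "'a::metric_space \<Rightarrow> 'a" and n d :: nat and z :: "nat \<Rightarrow> nat \<Rightarrow> 'a"
  assumes "minimal_system T"
    and "z \<in> Nd_pow T n d"
    and "minimal_point (Tdiag T n d) z"
  shows "minimal_point (Gd_diag T n d) z"
proof -
  have cpt: "compact (UNIV :: 'a set)" and hT: "homeomorphism UNIV UNIV T (inv T)"
    using assms(1) unfolding minimal_system_def by auto
  have TI: "\<And>y. T (inv T y) = y" and IT: "\<And>x. inv T (T x) = x"
    using hT unfolding homeomorphism_def by auto
  define E1 where "E1 = closure (range (tpow T))"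
  define Ed where "Ed = closure {gel T p q | p q. True}"
  interpret E1: rts E1 "(\<circ>)" unfolding E1_def by (rule rts_E1[OF cpt hT])
  interpret Ed: rts Ed pmul unfolding Ed_def by (rule rts_Ed[OF cpt hT])
  have tpE1: "tpow T k \<in> E1" for k unfolding E1_def by (rule subsetD[OF closure_subset]) simp
  have gelEd: "gel T p q \<in> Ed" for p q unfolding Ed_def by (rule subsetD[OF closure_subset]) blast
  \<comment> \<open>the minimal left ideal of E1 and the idempotent u fixing z\<close>
  have E1_left: "E1.left_ideal E1"
    unfolding E1.left_ideal_def
  proof (intro conjI ballI)
    show "E1 \<noteq> {}" using tpE1[of 0] by auto
    show "E1 \<subseteq> E1" by simp
    fix s a assume "s \<in> E1" "a \<in> E1"
    then show "s \<circ> a \<in> E1" by (rule E1.mult_closed)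
  qed
  obtain L1 where L1: "E1.min_left_ideal L1" using E1.exists_min_left_ideal[OF E1_left] by blast
  have L1I: "E1.left_ideal L1" using L1 by (rule E1.min_left_ideal_left_ideal)
  have L1sub: "L1 \<subseteq> E1" and L1id: "\<forall>s\<in>E1. \<forall>a\<in>L1. s \<circ> a \<in> L1" and L1ne: "L1 \<noteq> {}"
    using L1I unfolding E1.left_ideal_def by auto
  have L1cl: "closed L1" using E1.min_left_ideal_closed[OF L1] .
  have ca: "continuous_on UNIV (\<lambda>a. act n d (\<lambda>i. a) z)"
    using continuous_on_compose2[OF act_cont_f[of n d z] cont_const_fun] by simp
  have Td: "gact T n d p 0 = act n d (\<lambda>i. tpow T p)" for p
    by (simp add: gact_def act_def fun_eq_iff)
  have actid: "act n d (\<lambda>i. id) w = w" for w by (simp add: act_def fun_eq_iff)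
  define Y1 where "Y1 = closure (orbit (Tdiag T n d) z)"
  have minY1: "minimal_set (Tdiag T n d) Y1" using assms(3) unfolding minimal_point_def Y1_def .
  have orb1: "act n d (\<lambda>i. tpow T p) z \<in> orbit (Tdiag T n d) z" for p
    unfolding orbit_def Tdiag_def Td by blast
  have zY1: "z \<in> Y1"
  proof -
    have "z \<in> orbit (Tdiag T n d) z" using orb1[of 0] by (simp add: tpow_0 actid)
    then show ?thesis unfolding Y1_def using closure_subset[of "orbit (Tdiag T n d) z"] by auto
  qed
  define Z1 where "Z1 = (\<lambda>a. act n d (\<lambda>i. a) z) ` L1"
  have "(\<lambda>a. act n d (\<lambda>i. a) z) ` range (tpow T) \<subseteq> Y1"
  proof (rule subsetI)
    fix x assume "x \<in> (\<lambda>a. act n d (\<lambda>i. a) z) ` range (tpow T)"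
    then obtain p where "x = act n d (\<lambda>i. tpow T p) z" by auto
    then show "x \<in> Y1" unfolding Y1_def using orb1[of p] closure_subset[of "orbit (Tdiag T n d) z"] by auto
  qed
  then have "(\<lambda>a. act n d (\<lambda>i. a) z) ` E1 \<subseteq> Y1"
    unfolding E1_def Y1_def
    by (rule image_closure_subset[OF continuous_on_subset[OF ca subset_UNIV] closed_closure])
  then have Z1Y1: "Z1 \<subseteq> Y1" unfolding Z1_def using L1sub by blast
  have "compact L1" using E1.closed_sub_compact[OF L1cl L1sub] .
  then have "compact Z1" unfolding Z1_def
    using compact_continuous_image[OF continuous_on_subset[OF ca subset_UNIV]] by blast
  then have Z1cl: "closed Z1" by (rule compact_imp_closed)
  have Z1ne: "Z1 \<noteq> {}" unfolding Z1_def using L1ne by blast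
  have Z1inv: "\<forall>g\<in>Tdiag T n d. g ` Z1 \<subseteq> Z1"
  proof (intro ballI subsetI)
    fix g x assume g: "g \<in> Tdiag T n d" and x: "x \<in> g ` Z1"
    obtain p where gp: "g = act n d (\<lambda>i. tpow T p)" using g unfolding Tdiag_def Td by blast
    obtain a where a: "a \<in> L1" "x = g (act n d (\<lambda>i. a) z)" using x unfolding Z1_def by blast
    have "x = act n d (\<lambda>i. tpow T p \<circ> a) z" using a gp by (simp add: act_act pmul_def)
    moreover have "tpow T p \<circ> a \<in> L1" using L1id tpE1 a(1) by blast
    ultimately show "x \<in> Z1" unfolding Z1_def by blast
  qed
  have "Z1 = Y1" using minY1 Z1Y1 Z1ne Z1cl Z1inv unfolding minimal_set_def by blast
  then obtain a0 where a0: "a0 \<in> L1" "act n d (\<lambda>i. a0) z = z" using zY1 unfolding Z1_def by auto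
  define A where "A = L1 \<inter> (\<lambda>a. act n d (\<lambda>i. a) z) -` {z}"
  have Acl: "closed A" unfolding A_def
    using continuous_closed_preimage[OF continuous_on_subset[OF ca subset_UNIV] L1cl closed_singleton] .
  have Ane: "A \<noteq> {}" unfolding A_def using a0 by blast
  have Asub: "A \<subseteq> E1" unfolding A_def using L1sub by blast
  have Amult: "\<forall>a\<in>A. \<forall>b\<in>A. a \<circ> b \<in> A"
  proof (intro ballI)
    fix a b assume ab: "a \<in> A" "b \<in> A"
    have "a \<circ> b \<in> L1" using ab L1id Asub unfolding A_def by blast
    moreover have "act n d (\<lambda>i. a \<circ> b) z = z"
    proof -
      have "act n d (\<lambda>i. a \<circ> b) z = act n d (\<lambda>i. a) (act n d (\<lambda>i. b) z)"
        by (simp add: act_act pmul_def)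
      then show ?thesis using ab unfolding A_def by simp
    qed
    ultimately show "a \<circ> b \<in> A" unfolding A_def by blast
  qed
  obtain u where uA: "u \<in> A" and uu: "u \<circ> u = u"
    using E1.idempotent_exists[OF Asub Acl Ane Amult] by blast
  have uL1: "u \<in> L1" and uz: "act n d (\<lambda>i. u) z = z" using uA unfolding A_def by auto
  have uE1: "u \<in> E1" using uL1 L1sub by blast
  \<comment> \<open>the constant element is a minimal idempotent of Ed\<close>
  define ub where "ub = (\<lambda>i::nat. u)"
  have "(\<lambda>a. \<lambda>i::nat. a) ` range (tpow T) \<subseteq> Ed"
  proof
    fix x assume "x \<in> (\<lambda>a. \<lambda>i::nat. a) ` range (tpow T)"
    then obtain p where "x = (\<lambda>i. tpow T p)" by blast
    then have "x = gel T p 0" unfolding gel_def by simp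
    then show "x \<in> Ed" using gelEd by simp
  qed
  then have "(\<lambda>a. \<lambda>i::nat. a) ` E1 \<subseteq> Ed"
    unfolding E1_def Ed_def
    by (rule image_closure_subset[OF continuous_on_subset[OF cont_const_fun subset_UNIV] closed_closure])
  then have ubEd: "ub \<in> Ed" unfolding ub_def using uE1 by blast
  have ubub: "pmul ub ub = ub" unfolding ub_def pmul_def using uu by simp
  obtain L f where L: "Ed.min_left_ideal L" and fL: "f \<in> L" and ff: "pmul f f = f"
    and uf: "pmul ub f = f" and fu: "pmul f ub = f"
    using Ed.idempotent_below[OF ubEd ubub] by blast
  have LI: "Ed.left_ideal L" using L by (rule Ed.min_left_ideal_left_ideal)
  have Lsub: "L \<subseteq> Ed" and Lid: "\<forall>s\<in>Ed. \<forall>a\<in>L. pmul s a \<in> L"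
    using LI unfolding Ed.left_ideal_def by auto
  have fEd: "f \<in> Ed" using fL Lsub by blast
  have projE1: "g i \<in> E1" if "g \<in> Ed" for g i
  proof -
    have "(\<lambda>g. g i) ` {gel T p q | p q. True} \<subseteq> E1" unfolding gel_def using tpE1 by blast
    then have "(\<lambda>g. g i) ` Ed \<subseteq> E1"
      unfolding Ed_def E1_def
      by (rule image_closure_subset[OF continuous_on_subset[OF continuous_on_product_coordinates subset_UNIV] closed_closure])
    then show ?thesis using that by blast
  qed
  have "f i = u" for i
  proof (rule E1.min_idem_unique[OF L1 uL1])
    show "f i \<in> E1" using projE1[OF fEd] .
    show "f i \<circ> f i = f i" using fun_cong[OF ff, of i] unfolding pmul_def by simp
    show "u \<circ> f i = f i" using fun_cong[OF uf, of i] unfolding pmul_def ub_def by simp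
    show "f i \<circ> u = f i" using fun_cong[OF fu, of i] unfolding pmul_def ub_def by simp
  qed
  then have "f = ub" unfolding ub_def by auto
  then have ubL: "ub \<in> L" using fL by simp
  have ubz: "act n d ub z = z" using uz unfolding ub_def .
  have Gd: "Gd_diag T n d = {act n d (gel T p q) | p q. True}"
    unfolding Gd_diag_def using gact_eq by metis
  define Y where "Y = closure (orbit (Gd_diag T n d) z)"
  have orb: "orbit (Gd_diag T n d) w = {act n d (gel T p q) w | p q. True}" for w
    unfolding orbit_def Gd by blast
  have cb: "continuous_on UNIV (\<lambda>b. act n d b w)" for w by (rule act_cont_f)
  have actEd_sub: "(\<lambda>b. act n d b w) ` Ed \<subseteq> Z" if "closed Z" "\<forall>p q. act n d (gel T p q) w \<in> Z" for w Z
  proof -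
    have "(\<lambda>b. act n d b w) ` {gel T p q | p q. True} \<subseteq> Z" using that(2) by blast
    then show ?thesis unfolding Ed_def
      by (rule image_closure_subset[OF continuous_on_subset[OF cb subset_UNIV] that(1)])
  qed
  have YEd: "Y \<subseteq> (\<lambda>b. act n d b z) ` Ed"
  proof -
    have "compact ((\<lambda>b. act n d b z) ` Ed)"
      using compact_continuous_image[OF continuous_on_subset[OF cb subset_UNIV] Ed.S_compact] .
    then have cl: "closed ((\<lambda>b. act n d b z) ` Ed)" by (rule compact_imp_closed)
    have "orbit (Gd_diag T n d) z \<subseteq> (\<lambda>b. act n d b z) ` Ed" unfolding orb using gelEd by blast
    then show ?thesis unfolding Y_def using closure_minimal cl by blast
  qed
  have zorb: "z \<in> orbit (Gd_diag T n d) z"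
  proof -
    have "gel T 0 0 = (\<lambda>i. id)" unfolding gel_def by (simp add: tpow_0)
    then have "act n d (gel T 0 0) z = z" using actid by simp
    then show ?thesis unfolding orb by (metis (mono_tags, lifting) mem_Collect_eq)
  qed
  have gcont: "continuous_on UNIV (act n d (gel T p q))" for p q
    by (rule act_cont_w) (simp add: gel_def tpow_cont[OF hT])
  have Yinv: "\<forall>g\<in>Gd_diag T n d. g ` Y \<subseteq> Y"
  proof (intro ballI)
    fix g assume "g \<in> Gd_diag T n d"
    then obtain p q where g: "g = act n d (gel T p q)" unfolding Gd by blast
    have "g ` orbit (Gd_diag T n d) z \<subseteq> orbit (Gd_diag T n d) z"
    proof
      fix x assume "x \<in> g ` orbit (Gd_diag T n d) z"
      then obtain p' q' where "x = g (act n d (gel T p' q') z)" unfolding orb by blast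
      then have "x = act n d (gel T (p + p') (q + q')) z" using g by (simp add: act_act gel_mult[OF TI IT])
      then show "x \<in> orbit (Gd_diag T n d) z" unfolding orb by blast
    qed
    then have "g ` orbit (Gd_diag T n d) z \<subseteq> Y" unfolding Y_def using closure_subset by blast
    then show "g ` Y \<subseteq> Y" unfolding Y_def
      by (rule image_closure_subset[OF continuous_on_subset[OF gcont[of p q, folded g] subset_UNIV] closed_closure])
  qed
  have "minimal_set (Gd_diag T n d) Y"
    unfolding minimal_set_def
  proof (intro conjI allI impI)
    show "Y \<noteq> {}" unfolding Y_def using zorb closure_subset by blast
    show "closed Y" unfolding Y_def by simp
    show "\<forall>g\<in>Gd_diag T n d. g ` Y \<subseteq> Y" by (rule Yinv)
    fix Z assume Z: "Z \<subseteq> Y \<and> Z \<noteq> {} \<and> closed Z \<and> (\<forall>g\<in>Gd_diag T n d. g ` Z \<subseteq> Z)"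
    then obtain w where wZ: "w \<in> Z" by blast
    have Zinv: "act n d (gel T p q) x \<in> Z" if "x \<in> Z" for p q x
    proof -
      have "act n d (gel T p q) \<in> Gd_diag T n d" unfolding Gd by blast
      then show ?thesis using Z that by blast
    qed
    obtain b where b: "b \<in> Ed" "w = act n d b z" using wZ Z YEd by blast
    have "pmul b ub \<in> L" using Lid b(1) ubL by blast
    then have "(\<lambda>s. pmul s (pmul b ub)) ` Ed = L" by (rule Ed.min_left_ideal_gen[OF L])
    then obtain c where c: "c \<in> Ed" "pmul c (pmul b ub) = ub" using ubL by (metis imageE)
    have "act n d c w = act n d (pmul c (pmul b ub)) z"
      using b(2) ubz by (metis act_act)
    then have cw: "act n d c w = z" using c(2) ubz by simp
    have "(\<lambda>s. act n d s w) ` Ed \<subseteq> Z"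
      by (rule actEd_sub) (use Z Zinv wZ in blast)+
    then have "z \<in> Z" using c(1) cw by blast
    then have "orbit (Gd_diag T n d) z \<subseteq> Z" unfolding orb using Zinv by blast
    then have "Y \<subseteq> Z" unfolding Y_def using closure_minimal Z by blast
    then show "Z = Y" using Z by blast
  qed
  then show ?thesis unfolding minimal_point_def Y_def .
qed

end
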